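(* Let $p$ be a prime and $q$ a power of $p$. For every integer $m \ge p$ and every $d \in \mathbb{F}_q$, there exists a monic polynomial $f \in \mathbb{F}_q[x]$ of degree $m$ with $\operatorname{disc}(f) = d$.
   Context: For $f$ of degree $m\ge 2$ with leading coefficient $a_m$ and roots $\alpha_1,\dots,\alpha_m$ in a splitting field, $\operatorname{disc}(f) = a_m^{2m-2}\prod_{i<j}(\alpha_i-\alpha_j)^2$; for linear $f$, $\operatorname{disc}(f) = 1$. *)

theory Defs
  imports "HOL-Algebra.Algebraic_Closure_Type"
begin

text \<open>Discriminant of a polynomial over a field, following the paper:
  for degree m \<ge> 2 with leading coefficient a and roots r_1..r_m (with multiplicity)
  in a splitting field (here: the algebraic closure), disc f = a^(2m-2) * prod_{i<j} (r_i - r_j)^2;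
  for linear f, disc f = 1.  The value lies in the base field; of_ac maps it back.\<close>

definition roots_ac :: "'a::field poly \<Rightarrow> 'a alg_closure list" where
  "roots_ac f = (SOME rs. mset rs = proots (map_poly to_ac f))"

definition disc :: "'a::field poly \<Rightarrow> 'a" where
  "disc f = (if degree f = 1 then 1 else
     of_ac (let rs = roots_ac f in
       to_ac (lead_coeff f) ^ (2 * degree f - 2) *
       (\<Prod>j<length rs. \<Prod>i<j. (rs ! i - rs ! j) ^ 2)))"

end

theory Submission
  imports Defs
begin


lemma prod_list_map_mult:
  "prod_list (map (\<lambda>x. f x * g x) xs) = prod_list (map f xs) * prod_list (map g xs)"
  for f g :: "'b \<Rightarrow> 'a::comm_monoid_mult"
  by (induction xs) (auto simp: mult_ac)

lemma prod_list_map_nth: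
  "prod_list (map f xs) = (\<Prod>i<length xs. f (xs ! i))"
  by (induction xs) (simp_all add: prod.lessThan_Suc_shift del: prod.lessThan_Suc)

lemma poly_prod_linear:
  "poly (prod_list (map (\<lambda>x. [:-x,1:]) xs)) y = prod_list (map (\<lambda>x. y - x) xs)"
  for y :: "'a::comm_ring_1"
  by (induction xs) (auto simp: algebra_simps)

lemma poly_prod_linear_root:
  "x \<in> set xs \<Longrightarrow> poly (prod_list (map (\<lambda>x. [:-x,1:]) xs)) x = (0::'a::comm_ring_1)"
  by (induction xs) auto

lemma prod_list_neg:
  "prod_list (map (\<lambda>x. y - x) xs) = (-1)^length xs * prod_list (map (\<lambda>x. x - y) xs)"
  for y :: "'a::comm_ring_1"
  by (induction xs) (auto simp: algebra_simps)

lemma disc_core: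
  fixes rs :: "'a::field list"
  shows "(\<Prod>j<length rs. \<Prod>i<j. (rs ! i - rs ! j) ^ 2) =
    (-1)^(length rs * (length rs - 1) div 2) *
    prod_list (map (\<lambda>x. poly (pderiv (prod_list (map (\<lambda>x. [:-x,1:]) rs))) x) rs)"
proof (induction rs rule: rev_induct)
  case Nil
  then show ?case by simp
next
  case (snoc y xs)
  define n where "n = length xs"
  define Q where "Q = prod_list (map (\<lambda>x. [:-x,1:]) xs)"
  have Q': "prod_list (map (\<lambda>x. [:-x,1:]) (xs @ [y])) = Q * [:-y,1:]"
    by (simp add: Q_def)
  have pd: "pderiv (Q * [:-y,1:]) = Q + [:-y,1:] * pderiv Q"
    by (subst pderiv_mult) (simp add: pderiv_pCons)
  have "prod_list (map (\<lambda>x. poly (pderiv (Q * [:-y,1:])) x) xs)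
      = prod_list (map (\<lambda>x. (x - y) * poly (pderiv Q) x) xs)"
    unfolding pd by (intro arg_cong[where f=prod_list] map_cong refl)
      (simp add: Q_def poly_prod_linear_root algebra_simps)
  also have "\<dots> = prod_list (map (\<lambda>x. x - y) xs) * prod_list (map (\<lambda>x. poly (pderiv Q) x) xs)"
    by (rule prod_list_map_mult)
  finally have e1: "prod_list (map (\<lambda>x. poly (pderiv (Q * [:-y,1:])) x) xs) = \<dots>" .
  have e2: "poly (pderiv (Q * [:-y,1:])) y = (-1)^n * prod_list (map (\<lambda>x. x - y) xs)"
    unfolding pd by (simp add: Q_def poly_prod_linear prod_list_neg n_def)
  have D: "(\<Prod>j<length (xs@[y]). \<Prod>i<j. ((xs@[y]) ! i - (xs@[y]) ! j) ^ 2)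
     = (\<Prod>j<n. \<Prod>i<j. (xs ! i - xs ! j) ^ 2) * prod_list (map (\<lambda>x. x - y) xs) ^ 2"
  proof -
    have "(\<Prod>j<length (xs@[y]). \<Prod>i<j. ((xs@[y]) ! i - (xs@[y]) ! j) ^ 2)
      = (\<Prod>j<n. \<Prod>i<j. ((xs@[y]) ! i - (xs@[y]) ! j) ^ 2) * (\<Prod>i<n. ((xs@[y]) ! i - (xs@[y]) ! n) ^ 2)"
      by (simp add: n_def)
    also have "(\<Prod>j<n. \<Prod>i<j. ((xs@[y]) ! i - (xs@[y]) ! j) ^ 2) = (\<Prod>j<n. \<Prod>i<j. (xs ! i - xs ! j) ^ 2)"
      by (intro prod.cong refl) (auto simp: nth_append n_def)
    also have "(\<Prod>i<n. ((xs@[y]) ! i - (xs@[y]) ! n) ^ 2) = (\<Prod>i<n. (xs ! i - y) ^ 2)"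
      by (intro prod.cong refl) (auto simp: nth_append n_def)
    also have "\<dots> = prod_list (map (\<lambda>x. x - y) xs) ^ 2"
      by (simp add: prod_list_map_nth n_def prod_power_distrib)
    finally show ?thesis .
  qed
  have ex: "Suc n * (Suc n - 1) div 2 = n * (n - 1) div 2 + n"
  proof (cases n)
    case (Suc k)
    then show ?thesis by (simp add: algebra_simps) 
  qed simp
  have R: "prod_list (map (\<lambda>x. poly (pderiv (prod_list (map (\<lambda>x. [:-x,1:]) (xs@[y])))) x) (xs@[y]))
     = prod_list (map (\<lambda>x. x - y) xs) * prod_list (map (\<lambda>x. poly (pderiv Q) x) xs) *
       ((-1)^n * prod_list (map (\<lambda>x. x - y) xs))"
    unfolding Q' by (simp only: map_append prod_list.append list.map prod_list.Cons prod_list.Nil e1 e2 mult_1_right)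
  have L: "length (xs @ [y]) = Suc n" by (simp add: n_def)
  show ?case
    unfolding D R unfolding L ex snoc.IH[folded n_def Q_def]
    by (simp add: power_add power2_eq_square mult_ac)
qed

lemma map_poly_to_ac_mult: "map_poly to_ac (p * q) = map_poly to_ac p * map_poly to_ac q"
  by (rule poly_eqI) (simp add: coeff_map_poly coeff_mult to_ac_sum)

lemma map_poly_to_ac_prod_list:
  "map_poly to_ac (prod_list ps) = prod_list (map (map_poly to_ac) ps)"
  by (induction ps) (simp_all add: map_poly_to_ac_mult)

lemma map_poly_to_ac_pderiv: "map_poly to_ac (pderiv p) = pderiv (map_poly to_ac p)"
  by (rule poly_eqI) (simp add: coeff_map_poly coeff_pderiv)

lemma poly_map_to_ac: "poly (map_poly to_ac p) (to_ac x) = to_ac (poly p x)"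
  by (induction p) (simp_all add: map_poly_pCons)

lemma proots_linprod: "proots (\<Prod>x\<in>#A. [:-x,1:]) = (A :: 'b::idom multiset)"
proof (induction A)
  case (add x A)
  have "proots ([:-x,1:] * (\<Prod>x\<in>#A. [:-x,1:])) = proots [:-x,1:] + proots (\<Prod>x\<in>#A. [:-x,1:])"
    by (rule proots_mult) auto
  then show ?case using add by simp
qed simp

lemma poly_prod_linear':
  "poly (prod_list (map (\<lambda>t. [:-g t,1:]) xs)) y = prod_list (map (\<lambda>t. y - g t) xs)"
  for y :: "'a::comm_ring_1"
  by (induction xs) (auto simp: algebra_simps)

lemma prod_list_swap:
  "prod_list (map (\<lambda>x. prod_list (map (\<lambda>t. g x t) L)) rs) =
   prod_list (map (\<lambda>t. prod_list (map (\<lambda>x. g x t) rs)) L)"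
  for g :: "_ \<Rightarrow> _ \<Rightarrow> 'a::comm_monoid_mult"
proof (induction L)
  case Nil
  have "prod_list (map (\<lambda>x. 1::'a) rs) = 1" by (induction rs) auto
  then show ?case by simp
qed (simp_all add: prod_list_map_mult)

lemma prod_list_const_mult:
  "prod_list (map (\<lambda>x. c * g x) rs) = c ^ length rs * prod_list (map g rs)"
  for g :: "_ \<Rightarrow> 'a::comm_monoid_mult"
  by (induction rs) (simp_all add: mult_ac)



lemma disc_formula:
  fixes f :: "'a::field poly" and c :: 'a
  assumes mon: "lead_coeff f = 1" and deg: "degree f = m" and m2: "m \<ge> 2"
   and der: "pderiv f = smult c (prod_list (map (\<lambda>t. [:-t,1:]) L))"
  shows "disc f = (-1)^(m*(m-1) div 2) * c^m * prod_list (map (\<lambda>t. (-1)^m * poly f t) L)"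
proof -
  define F where "F = map_poly to_ac f"
  have inj0: "\<And>x. x \<noteq> 0 \<Longrightarrow> to_ac x \<noteq> 0" by simp
  have degF: "degree F = m" unfolding F_def by (subst degree_map_poly) (simp_all add: deg)
  have lcF: "lead_coeff F = 1" unfolding F_def
    by (subst lead_coeff_map_poly_nz) (simp_all add: mon)
  have "F \<noteq> 0" using lcF by auto
  obtain A where Asz: "size A = degree F" and A: "F = smult (lead_coeff F) (\<Prod>x\<in>#A. [:-x,1:])"
    using alg_closed_imp_factorization[OF \<open>F\<noteq>0\<close>] by blast
  hence FA: "F = (\<Prod>x\<in>#A. [:-x,1:])" using lcF by simp
  have pA: "proots F = A" unfolding FA by (rule proots_linprod)
  define rs where "rs = roots_ac f"
  have "\<exists>rs. mset rs = proots (map_poly to_ac f)" by (rule ex_mset)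
  hence "mset (SOME rs. mset rs = proots (map_poly to_ac f)) = proots (map_poly to_ac f)" by (rule someI_ex)
  hence rs: "mset rs = A" unfolding rs_def roots_ac_def using pA F_def by simp
  have Frs: "F = prod_list (map (\<lambda>x. [:-x,1:]) rs)"
    unfolding FA rs[symmetric] by (simp only: mset_map[symmetric] prod_mset_prod_list)
  have len: "length rs = m"
    using Asz degF rs by (metis size_mset)
  have dF: "pderiv F = smult (to_ac c) (prod_list (map (\<lambda>t. [:-to_ac t,1:]) L))"
    unfolding F_def map_poly_to_ac_pderiv[symmetric] der
    by (simp add: map_poly_smult map_poly_to_ac_prod_list o_def map_poly_pCons)
  have pv: "poly (pderiv F) x = to_ac c * prod_list (map (\<lambda>t. x - to_ac t) L)" for x
    unfolding dF by (simp add: poly_prod_linear')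
  have pr: "prod_list (map (\<lambda>x. x - to_ac t) rs) = (-1)^m * to_ac (poly f t)" for t
  proof -
    have "to_ac (poly f t) = poly F (to_ac t)" by (simp add: F_def poly_map_to_ac)
    also have "\<dots> = prod_list (map (\<lambda>x. to_ac t - x) rs)" unfolding Frs by (rule poly_prod_linear)
    also have "\<dots> = (-1)^m * prod_list (map (\<lambda>x. x - to_ac t) rs)" by (simp add: prod_list_neg len)
    finally show ?thesis by simp
  qed
  have core: "(\<Prod>j<length rs. \<Prod>i<j. (rs ! i - rs ! j) ^ 2) =
     to_ac ((-1)^(m*(m-1) div 2) * c^m * prod_list (map (\<lambda>t. (-1)^m * poly f t) L))"
  proof -
    have "(\<Prod>j<length rs. \<Prod>i<j. (rs ! i - rs ! j) ^ 2) =
      (-1)^(m * (m - 1) div 2) * prod_list (map (\<lambda>x. poly (pderiv F) x) rs)"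
      using disc_core[of rs] unfolding Frs[symmetric] len by simp
    also have "prod_list (map (\<lambda>x. poly (pderiv F) x) rs) =
       to_ac c ^ m * prod_list (map (\<lambda>x. prod_list (map (\<lambda>t. x - to_ac t) L)) rs)"
      unfolding pv prod_list_const_mult len ..
    also have "\<dots> = to_ac c ^ m * prod_list (map (\<lambda>t. prod_list (map (\<lambda>x. x - to_ac t) rs)) L)"
      by (subst prod_list_swap) (rule refl)
    also have "\<dots> = to_ac c ^ m * prod_list (map (\<lambda>t. (-1)^m * to_ac (poly f t)) L)"
      unfolding pr ..
    finally show ?thesis by (simp add: to_ac_prod_list o_def)
  qed
  have "degree f \<noteq> 1" using deg m2 by simp
  then show ?thesis
    unfolding disc_def Let_def rs_def[symmetric] mon to_ac_1 power_one mult_1_left core of_ac_to_ac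
    by (rule if_not_P)
qed



lemma neg1_sq: "(-1::'a::comm_ring_1)^k * (-1)^k = 1"
  by (simp flip: power_mult_distrib)

lemma frob_inj:
  fixes x y :: "'a::field"
  assumes "prime p" "CHAR('a) = p" "x^p = y^p"
  shows "x = y"
proof -
  have "((x - y) + y)^p = (x - y)^p + y^p"
    by (rule freshmans_dream) (use assms in auto)
  hence "(x - y)^p = 0" using assms(3) by simp
  thus ?thesis by simp
qed

lemma frob_surj:
  fixes z :: "'a::{field,finite}"
  assumes "prime p" "CHAR('a) = p"
  shows "\<exists>y. y^p = z"
proof -
  have "inj (\<lambda>y::'a. y^p)" by (rule injI) (rule frob_inj[OF assms])
  hence "surj (\<lambda>y::'a. y^p)" by (rule finite_UNIV_inj_surj[OF finite_UNIV])
  thus ?thesis unfolding surj_def by (metis)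
qed

lemma case_p:
  fixes d :: "'a::{field,finite}"
  assumes pr: "prime p" and ch: "CHAR('a) = p"
  shows "\<exists>f::'a poly. lead_coeff f = 1 \<and> degree f = p \<and> disc f = d"
proof -
  define \<epsilon> :: 'a where "\<epsilon> = (-1)^(p*(p-1) div 2)"
  have ee: "\<epsilon> * \<epsilon> = 1" unfolding \<epsilon>_def by (rule neg1_sq)
  obtain c where c: "c^p = \<epsilon> * d" using frob_surj[OF pr ch] by blast
  define f where "f = monom (1::'a) p + monom c 1"
  have p2: "p \<ge> 2" using pr by (simp add: prime_ge_2_nat)
  have deg: "degree f = p" unfolding f_def
    by (subst degree_add_eq_left) (use p2 degree_monom_le[of c 1] in \<open>auto simp: degree_monom_eq\<close>)
  have lc: "lead_coeff f = 1" using deg p2 by (simp add: f_def coeff_monom)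
  have chp: "of_nat p = (0::'a)" by (metis ch of_nat_CHAR)
  have der: "pderiv f = smult c (prod_list (map (\<lambda>t. [:-t,1:]) []))"
    unfolding f_def pderiv_add pderiv_monom chp by (simp add: monom_0)
  have "disc f = \<epsilon> * c^p" using disc_formula[OF lc deg p2 der] by (simp add: \<epsilon>_def)
  also have "\<dots> = d" using c ee by (simp flip: mult.assoc)
  finally show ?thesis using lc deg by blast
qed

lemma char_of_nat_0:
  assumes "CHAR('a::field) = p" "p dvd n" shows "of_nat n = (0::'a)"
  using assms of_nat_eq_0_iff_char_dvd by blast

lemma case_0:
  fixes d :: "'a::{field,finite}"
  assumes pr: "prime p" and ch: "CHAR('a) = p" and dv: "p dvd m" and mp: "m > p"
  shows "\<exists>f::'a poly. lead_coeff f = 1 \<and> degree f = m \<and> disc f = d"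
proof -
  define \<epsilon> :: 'a where "\<epsilon> = (-1)^(m*(m-1) div 2)"
  have ee: "\<epsilon> * \<epsilon> = 1" unfolding \<epsilon>_def by (rule neg1_sq)
  obtain y where y: "y^p = \<epsilon> * d" using frob_surj[OF pr ch] by blast
  define b :: 'a where "b = (-1)^m * y - 1"
  define Xp :: "'a poly" where "Xp = [:0,1:]"
  define Yp :: "'a poly" where "Yp = [:-1,1:]"
  define g where "g = Xp * Yp^p + [:b:]"
  define f where "f = monom 1 m + g"
  have p2: "p \<ge> 2" using pr by (simp add: prime_ge_2_nat)
  have dY: "degree (Yp^p) = p" unfolding Yp_def by (simp add: degree_linear_power)
  have "Yp^p \<noteq> 0" unfolding Yp_def by simp
  hence dXY: "degree (Xp * Yp^p) = p + 1" unfolding Xp_def using dY by simp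
  have dg: "degree g = p + 1" unfolding g_def
    by (subst degree_add_eq_left) (use dXY in auto)
  obtain k where k: "m = p * k" using dv by (auto elim: dvdE)
  have "k \<ge> 2"
  proof (rule ccontr)
    assume "\<not> k \<ge> 2" then have "k = 0 \<or> k = 1" by auto
    thus False using k mp by auto
  qed
  hence "m \<ge> p * 2" unfolding k by (rule mult_le_mono2)
  hence mp2: "m > p + 1" using p2 by simp
  have deg: "degree f = m" unfolding f_def
    by (subst degree_add_eq_left) (use dg mp2 in \<open>auto simp: degree_monom_eq\<close>)
  have lc: "lead_coeff f = 1" using deg dg mp2 by (simp add: f_def coeff_monom coeff_eq_0)
  have m2: "m \<ge> 2" using mp p2 by simp
  have chp: "of_nat p = (0::'a)" by (metis ch of_nat_CHAR)
  have chm: "of_nat m = (0::'a)" by (rule char_of_nat_0[OF ch dv])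
  have der: "pderiv f = smult 1 (prod_list (map (\<lambda>t. [:-t,1:]) (replicate p 1)))"
    unfolding f_def g_def pderiv_add pderiv_monom chm pderiv_mult pderiv_power chp
    by (simp add: Yp_def Xp_def pderiv_pCons)
  have f1: "poly f 1 = 1 + b"
    using p2 by (simp add: f_def g_def Xp_def Yp_def poly_monom power_0_left)
  have "disc f = \<epsilon> * ((-1)^m * (1 + b))^p"
    using disc_formula[OF lc deg m2 der] by (simp add: \<epsilon>_def f1)
  also have "(-1)^m * (1 + b) = y" by (simp add: b_def flip: mult.assoc neg1_sq)
  also have "\<epsilon> * y^p = d" using y ee by (simp flip: mult.assoc)
  finally show ?thesis using lc deg by blast
qed

lemma case_1:
  fixes d :: "'a::{field,finite}"
  assumes pr: "prime p" and ch: "CHAR('a) = p" and md: "m mod p = 1" and mp: "m > p"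
  shows "\<exists>f::'a poly. lead_coeff f = 1 \<and> degree f = m \<and> disc f = d"
proof -
  define n where "n = m - p"
  have p2: "p \<ge> 2" using pr by (simp add: prime_ge_2_nat)
  have n1: "n \<ge> 1" using mp by (simp add: n_def)
  have "n mod p = 1" using md mp unfolding n_def by (metis le_mod_geq less_imp_le)
  hence "p dvd n - 1" using dvd_minus_mod[of p n] by simp
  hence "of_nat (n - 1) = (0::'a)" by (rule char_of_nat_0[OF ch])
  moreover have "n = Suc (n - 1)" using n1 by simp
  hence "of_nat n = (1::'a) + of_nat (n - 1)" by (metis of_nat_Suc)
  ultimately have chn: "of_nat n = (1::'a)" by simp
  define \<epsilon> :: 'a where "\<epsilon> = (-1)^(m*(m-1) div 2)"
  define s :: 'a where "s = \<epsilon> * (-1)^(m*(n-1))"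
  have "s * s = (\<epsilon> * \<epsilon>) * ((-1)^(m*(n-1)) * (-1)^(m*(n-1)))" by (simp add: s_def mult_ac)
  hence ss: "s * s = 1" unfolding \<epsilon>_def neg1_sq by simp
  obtain y where y: "y^p = s * d" using frob_surj[OF pr ch] by blast
  define c :: 'a where "c = (-1)^m * y - 1"
  define Xp :: "'a poly" where "Xp = [:0,1:]"
  define Yp :: "'a poly" where "Yp = [:-1,1:]"
  define g where "g = monom c p + 1"
  define f where "f = Xp^n * Yp^p + g"
  have m2: "m \<ge> 2" using mp p2 by simp
  have dXY: "degree (Xp^n * Yp^p) = m" unfolding Xp_def Yp_def n_def
    using mp by (simp add: degree_mult_eq degree_linear_power)
  have lXY: "lead_coeff (Xp^n * Yp^p) = 1" unfolding Xp_def Yp_def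
    by (simp add: lead_coeff_mult lead_coeff_power)
  have dg: "degree g \<le> p" unfolding g_def
    by (rule order.trans[OF degree_add_le_max]) (simp add: degree_monom_le)
  have deg: "degree f = m" unfolding f_def
    by (subst degree_add_eq_left) (use dg dXY mp in auto)
  have lc: "lead_coeff f = 1" using deg dg mp dXY lXY by (simp add: f_def coeff_eq_0)
  have chp: "of_nat p = (0::'a)" by (metis ch of_nat_CHAR)
  have der: "pderiv f = smult 1 (prod_list (map (\<lambda>t. [:-t,1:]) (replicate (n-1) 0 @ replicate p 1)))"
    unfolding f_def g_def pderiv_add pderiv_monom pderiv_mult pderiv_power chp chn
    by (simp add: Yp_def Xp_def pderiv_pCons)
  have f0: "poly f 0 = 1"
    using p2 n1 by (simp add: f_def g_def Xp_def Yp_def poly_monom power_0_left)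
  have f1: "poly f 1 = c + 1"
    using p2 by (simp add: f_def g_def Xp_def Yp_def poly_monom power_0_left)
  have "disc f = \<epsilon> * ((-1)^m)^(n-1) * ((-1)^m * (c + 1))^p"
    using disc_formula[OF lc deg m2 der] by (simp add: \<epsilon>_def f0 f1)
  also have "(-1)^m * (c + 1) = y" by (simp add: c_def flip: mult.assoc neg1_sq)
  also have "\<epsilon> * ((-1)^m)^(n-1) = s" by (simp add: s_def power_mult)
  also have "s * y^p = d" using y ss by (simp flip: mult.assoc)
  finally show ?thesis using lc deg by blast
qed

lemma case_gen:
  fixes d :: "'a::{field,finite}"
  assumes pr: "prime p" and ch: "CHAR('a) = p" and md0: "m mod p \<noteq> 0" and md1: "m mod p \<noteq> 1"
    and mp: "m \<ge> p"
  shows "\<exists>f::'a poly. lead_coeff f = 1 \<and> degree f = m \<and> disc f = d"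
proof -
  have p2: "p \<ge> 2" using pr by (simp add: prime_ge_2_nat)
  have "m \<noteq> p" using md0 by auto
  moreover have "m \<noteq> p + 1" using md1 p2 by (auto simp: mod_Suc)
  ultimately have mp2: "m \<ge> p + 2" using mp by simp
  define e where "e = m - 1 - p"
  have e1: "e \<ge> 1" using mp2 by (simp add: e_def)
  define E :: 'a where "E = of_nat e"
  have "\<not> p dvd e"
  proof
    assume "p dvd e"
    hence "p dvd e + p" by simp
    moreover have "e + p = m - 1" using mp2 by (simp add: e_def)
    ultimately obtain k where k: "m - 1 = p * k" by (metis dvdE)
    hence "m = p * k + 1" using mp2 by simp
    hence "m mod p = 1 mod p" by (metis add.commute mod_mult_self2)
    hence "m mod p = 1" using p2 by simp
    thus False using md1 by simp
  qed
  hence E0: "E \<noteq> 0" unfolding E_def using ch of_nat_eq_0_iff_char_dvd by blast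
  have "\<not> p dvd e + 1"
  proof
    assume "p dvd e + 1"
    hence "p dvd e + 1 + p" using dvd_add dvd_refl by blast
    moreover have "e + 1 + p = m" using mp2 by (simp add: e_def)
    ultimately show False using md0 by auto
  qed
  hence "of_nat (e + 1) \<noteq> (0::'a)" using ch of_nat_eq_0_iff_char_dvd by blast
  hence E10: "E + 1 \<noteq> 0" unfolding E_def by (simp add: add.commute)
  define r :: 'a where "r = (E + 1) / E"
  have Er: "E * r = E + 1" using E0 by (simp add: r_def)
  have r1: "1 - r \<noteq> 0" using Er E0 by auto
  define \<epsilon> :: 'a where "\<epsilon> = (-1)^(m*(m-1) div 2)"
  define K :: 'a where "K = \<epsilon> * (E + 1)^m * ((-1)^m)^(e-1) * (-1)^m * ((-1)^m)^p"
  have K0: "K \<noteq> 0" using E10 by (simp add: K_def \<epsilon>_def)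
  obtain y where y: "y^p = (d / K - 1) / (1 - r)" using frob_surj[OF pr ch] by blast
  define w where "w = 1 - y"
  define Xp :: "'a poly" where "Xp = [:0,1:]"
  define Yp :: "'a poly" where "Yp = [:-w,1:]"
  define A where "A = Xp^e * [:-r,1:]"
  define f where "f = A * Yp^p + 1"
  have m2: "m \<ge> 2" using mp2 by simp
  have d1: "degree (Xp^e) = e" unfolding Xp_def by (rule degree_linear_power)
  have d2: "degree [:-r,1:] = (1::nat)" by simp
  have d3: "degree (Yp^p) = p" unfolding Yp_def by (rule degree_linear_power)
  have n1: "Xp^e \<noteq> 0" "[:-r,1:] \<noteq> 0" "Yp^p \<noteq> 0" by (simp_all add: Xp_def Yp_def)
  have nA: "A \<noteq> 0" unfolding A_def using n1(1,2) mult_eq_0_iff by blast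
  have dA0: "degree A = e + 1" unfolding A_def degree_mult_eq[OF n1(1) n1(2)] d1 d2 ..
  have "degree (A * Yp^p) = e + 1 + p" unfolding degree_mult_eq[OF nA n1(3)] dA0 d3 ..
  hence dA: "degree (A * Yp^p) = m" using mp2 by (simp add: e_def)
  have lA: "lead_coeff (A * Yp^p) = 1" unfolding A_def lead_coeff_mult lead_coeff_power
    by (simp add: Xp_def Yp_def)
  have deg: "degree f = m" unfolding f_def
    by (subst degree_add_eq_left) (use dA mp2 in auto)
  have lc: "lead_coeff f = 1" using deg dA lA mp2 by (simp add: f_def)
  have chp: "of_nat p = (0::'a)" by (metis ch of_nat_CHAR)
  have XE: "Xp^e = Xp^(e-1) * Xp" using power_minus_mult[of e Xp] e1 by simp
  have pX: "pderiv Xp = 1" unfolding Xp_def by (simp add: pderiv_pCons)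
  have pr: "pderiv [:-r,1:] = 1" by (simp add: pderiv_pCons)
  have pXe: "pderiv (Xp^e) = smult E (Xp^(e-1))" by (simp add: pderiv_power pX E_def)
  define R where "R = [:-r,1:]"
  have pR: "pderiv R = 1" unfolding R_def by (simp add: pderiv_pCons)
  have AR: "A = Xp^e * R" unfolding A_def R_def ..
  have dA': "pderiv A = smult (E + 1) (Xp^(e-1) * [:-1,1:])"
  proof -
    have "pderiv A = Xp^e + R * smult E (Xp^(e-1))"
      unfolding AR pderiv_mult pR pXe by simp
    also have "\<dots> = Xp^(e-1) * (Xp + smult E R)"
      unfolding XE by (simp add: algebra_simps)
    also have "Xp + smult E R = smult (E + 1) [:-1,1:]"
      unfolding Xp_def R_def using Er by (simp add: algebra_simps)
    finally show ?thesis by (simp only: mult_smult_right)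
  qed
  have der: "pderiv f = smult (E + 1) (prod_list (map (\<lambda>t. [:-t,1:]) (replicate (e-1) 0 @ [1] @ replicate p w)))"
    unfolding f_def pderiv_add pderiv_mult pderiv_power chp dA'
    by (simp add: Yp_def Xp_def algebra_simps)
  have f0: "poly f 0 = 1"
    using p2 e1 by (simp add: f_def A_def Xp_def Yp_def power_0_left)
  have fw: "poly f w = 1"
    using p2 by (simp add: f_def A_def Xp_def Yp_def power_0_left)
  have f1: "poly f 1 = (1 - r) * y^p + 1"
    by (simp add: f_def A_def Xp_def Yp_def w_def)
  have Em: "E + 1 = of_nat (m - p)"
    unfolding E_def using mp2 by (simp add: e_def)
  have "disc f = K * poly f 1"
    using disc_formula[OF lc deg m2 der] by (simp add: K_def \<epsilon>_def f0 fw mult_ac)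
  also have "\<dots> = d" unfolding f1 y using r1 K0 by (simp add: field_simps)
  finally show ?thesis using lc deg by blast
qed


theorem theorem6p1:
  fixes p m :: nat and d :: "'a::{field, finite}"
  assumes "prime p" and "CHAR('a) = p" and "m \<ge> p"
  shows "\<exists>f :: 'a poly. lead_coeff f = 1 \<and> degree f = m \<and> disc f = d"
proof (cases "m mod p = 0")
  case True
  show ?thesis
  proof (cases "m = p")
    case True
    then show ?thesis using case_p[OF assms(1,2)] by simp
  next
    case False
    then have "m > p" using assms(3) by simp
    moreover have "p dvd m" using \<open>m mod p = 0\<close> by (simp add: mod_eq_0_iff_dvd)
    ultimately show ?thesis using case_0[OF assms(1,2)] by blast
  qed
next
  case False
  show ?thesis
  proof (cases "m mod p = 1")
    case True
    then have "m \<noteq> p" by auto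
    then have "m > p" using assms(3) by simp
    then show ?thesis using case_1[OF assms(1,2) True] by blast
  next
    case False2: False
    show ?thesis using case_gen[OF assms(1,2) False False2 assms(3)] .
  qed
qed

end
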